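(* Let $\mathbb{S}$ be a finite state space with $|\mathbb{S}|=K$ and let ${\bm Q}$ be the $K\times K$ transition rate matrix of a stationary and ergodic (irreducible) continuous-time Markov chain on $\mathbb{S}$. Regard ${\bm Q}$ as a function of its off-diagonal entries $q_{ij}\ge 0$ ($i\neq j$), the diagonal being determined by the requirement that each row sums to zero. Let ${\bm P}({\bm Q})={\bm I}+{\bm Q}/\gamma({\bm Q})$, where $\gamma$ is a positive function of the off-diagonal entries with $\gamma({\bm Q})>\max_{k}(-{\bm Q}_{kk})$, and fix $i\neq j$ such that ${\bm P}$ is differentiable with respect to $q_{ij}$ at ${\bm Q}$. Write ${\bm P}={\bm P}({\bm Q})$, let ${\bm\pi}$ be the unique stationary distribution of the chain (so ${\bm\pi}^{\mathsf T}{\bm Q}=0$), and let ${\bm\Pi}$ be the $K\times K$ matrix each of whose rows equals ${\bm\pi}^{\mathsf T}$. Then the limit $$\lim_{t\to\infty}\sum_{l=1}^{t}{\bm P}^{t-l}\,\frac{\partial {\bm P}({\bm Q})}{\partial q_{ij}}\,{\bm P}^{l-1}$$ exists and is unique, and it equals $${\bm\Pi}\sum_{l=0}^{\infty}\frac{\partial {\bm P}({\bm Q})}{\partial q_{ij}}\,{\bm P}^{l},$$ where the series converges.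
   Context: A transition rate matrix has nonnegative off-diagonal entries and rows summing to zero; for a stationary ergodic chain on a finite state space there is a unique stationary distribution ${\bm\pi}$. The matrix ${\bm P}={\bm I}+{\bm Q}/\gamma$ is the uniformized transition probability matrix of the chain; it has the same stationary distribution as ${\bm Q}$. In the paper's construction $\gamma({\bm Q})=\max_k(-{\bm Q}_{kk})+\epsilon$ for a fixed $\epsilon>0$. Matrix derivatives are entrywise. *)

theory Defs
  imports "HOL-Analysis.Analysis"
begin

text \<open>K x K matrices over a finite index type 'n (K = CARD('n)); products are
  matrix products (**), not the componentwise product.\<close>

primrec matpow :: "real^'n^'n \<Rightarrow> nat \<Rightarrow> real^'n^'n" where
  "matpow A 0 = mat 1"
| "matpow A (Suc k) = matpow A k ** A"

definition rate_matrix :: "real^'n^'n \<Rightarrow> bool" where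
  "rate_matrix Q \<longleftrightarrow> (\<forall>a b. a \<noteq> b \<longrightarrow> Q$a$b \<ge> 0) \<and> (\<forall>a. (\<Sum>b\<in>UNIV. Q$a$b) = 0)"

definition irreducible_rate :: "real^'n^'n \<Rightarrow> bool" where
  "irreducible_rate Q \<longleftrightarrow> (\<forall>a b. (a, b) \<in> {(x, y). x \<noteq> y \<and> Q$x$y > 0}\<^sup>*)"

definition stationary_dist :: "real^'n^'n \<Rightarrow> real^'n \<Rightarrow> bool" where
  "stationary_dist Q p \<longleftrightarrow> (\<forall>k. p$k \<ge> 0) \<and> (\<Sum>k\<in>UNIV. p$k) = 1 \<and> p v* Q = 0"

definition unif :: "(real^'n^'n \<Rightarrow> real) \<Rightarrow> real^'n^'n \<Rightarrow> real^'n^'n" where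
  "unif \<gamma> Q = mat 1 + (1 / \<gamma> Q) *\<^sub>R Q"

text \<open>Q viewed as a function of its off-diagonal entries: increasing q_ij by h
  forces the diagonal entry Q_ii to decrease by h (row sum stays zero).\<close>
definition perturb :: "real^'n^'n \<Rightarrow> 'n \<Rightarrow> 'n \<Rightarrow> real \<Rightarrow> real^'n^'n" where
  "perturb Q i j h = (\<chi> a b. Q$a$b + (if a = i \<and> b = j then h else 0)
                                   - (if a = i \<and> b = i then h else 0))"

definition rows_eq :: "real^'n \<Rightarrow> real^'n^'n" where
  "rows_eq p = (\<chi> a b. p$b)"

end

theory Submission
  imports Defs
begin

definition l1m :: "real^'n^'m \<Rightarrow> real" where
  "l1m A = (\<Sum>a\<in>UNIV. \<Sum>b\<in>UNIV. \<bar>A$a$b\<bar>)"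

lemma l1m_nonneg: "0 \<le> l1m A"
  unfolding l1m_def by (intro sum_nonneg) auto

lemma entry_le_l1m: "\<bar>A$a$b\<bar> \<le> l1m A"
proof -
  have "\<bar>A$a$b\<bar> \<le> (\<Sum>b\<in>UNIV. \<bar>A$a$b\<bar>)"
    by (rule member_le_sum) auto
  also have "\<dots> \<le> l1m A" unfolding l1m_def
    by (rule member_le_sum[where f="\<lambda>a. \<Sum>b\<in>UNIV. \<bar>A$a$b\<bar>"]) (auto intro: sum_nonneg)
  finally show ?thesis .
qed

lemma norm_le_l1m: fixes A :: "real^'n^'m" shows "norm A \<le> l1m A"
proof -
  have "norm A \<le> (\<Sum>a\<in>UNIV. norm (A$a))" unfolding norm_vec_def by (rule L2_set_le_sum) simp
  also have "\<dots> \<le> l1m A" unfolding l1m_def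
    by (intro sum_mono) (use norm_le_l1_cart in auto)
  finally show ?thesis .
qed

lemma l1m_add: "l1m (A + B) \<le> l1m A + l1m B"
  unfolding l1m_def sum.distrib[symmetric]
  by (intro sum_mono) (auto simp: abs_triangle_ineq)

lemma row_le_l1m: "(\<Sum>b\<in>UNIV. \<bar>A$a$b\<bar>) \<le> l1m A"
  unfolding l1m_def
  by (rule member_le_sum[where f="\<lambda>a. \<Sum>b\<in>UNIV. \<bar>A$a$b\<bar>"]) (auto intro: sum_nonneg)

lemma l1m_mult: "l1m (A ** B) \<le> l1m A * l1m B"
proof -
  have "l1m (A ** B) = (\<Sum>a\<in>UNIV. \<Sum>b\<in>UNIV. \<bar>\<Sum>c\<in>UNIV. A$a$c * B$c$b\<bar>)"
    unfolding l1m_def matrix_matrix_mult_def by simp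
  also have "\<dots> \<le> (\<Sum>a\<in>UNIV. \<Sum>b\<in>UNIV. \<Sum>c\<in>UNIV. \<bar>A$a$c\<bar> * \<bar>B$c$b\<bar>)"
    by (intro sum_mono) (metis (no_types, lifting) abs_mult sum.cong sum_abs)
  also have "\<dots> = (\<Sum>a\<in>UNIV. \<Sum>c\<in>UNIV. \<bar>A$a$c\<bar> * (\<Sum>b\<in>UNIV. \<bar>B$c$b\<bar>))"
    by (intro sum.cong refl) (subst sum.swap, simp add: sum_distrib_left)
  also have "\<dots> \<le> (\<Sum>a\<in>UNIV. \<Sum>c\<in>UNIV. \<bar>A$a$c\<bar> * l1m B)"
    by (intro sum_mono mult_left_mono row_le_l1m) auto
  also have "\<dots> = l1m A * l1m B"
    unfolding l1m_def by (simp add: sum_distrib_right)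
  finally show ?thesis .
qed


lemma mmult_entry: "(A ** B)$a$b = (\<Sum>c\<in>UNIV. A$a$c * B$c$b)"
  by (simp add: matrix_matrix_mult_def)

lemma matrix_add_rdistrib: "((A + B) ** C) = (A ** C) + (B ** C)"
  by (vector matrix_matrix_mult_def sum.distrib[symmetric] field_simps)

lemma matpow_add: "matpow A (m + n) = matpow A m ** matpow A n"
  by (induction n) (simp_all add: matrix_mul_assoc)

lemma matpow_Suc_left: "matpow A (Suc n) = A ** matpow A n"
  using matpow_add[of A 1 n] by simp

definition stoch :: "real^'n^'n \<Rightarrow> bool" where
  "stoch P \<longleftrightarrow> (\<forall>a b. 0 \<le> P$a$b) \<and> (\<forall>a. (\<Sum>b\<in>UNIV. P$a$b) = 1)"

lemma stoch_mult: assumes "stoch A" "stoch B" shows "stoch (A ** B)"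
proof -
  have "0 \<le> (A ** B)$a$b" for a b
    using assms unfolding stoch_def mmult_entry by (auto intro!: sum_nonneg)
  moreover have "(\<Sum>b\<in>UNIV. (A ** B)$a$b) = 1" for a
  proof -
    have "(\<Sum>b\<in>UNIV. (A ** B)$a$b) = (\<Sum>c\<in>UNIV. A$a$c * (\<Sum>b\<in>UNIV. B$c$b))"
      unfolding mmult_entry by (subst sum.swap, simp add: sum_distrib_left)
    also have "\<dots> = 1" using assms unfolding stoch_def by simp
    finally show ?thesis .
  qed
  ultimately show ?thesis unfolding stoch_def by blast
qed

lemma stoch_id: "stoch (mat 1 :: real^'n^'n)"
proof -
  have "(\<Sum>b\<in>UNIV. (mat 1 :: real^'n^'n)$a$b) = 1" for a
    by (simp add: mat_def sum.delta)
  then show ?thesis unfolding stoch_def by (simp add: mat_def)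
qed

lemma stoch_matpow: "stoch P \<Longrightarrow> stoch (matpow P m)"
  by (induction m) (simp_all add: stoch_id stoch_mult)

lemma stoch_le1: assumes "stoch P" shows "P$a$b \<le> 1"
proof -
  have "P$a$b \<le> (\<Sum>b\<in>UNIV. P$a$b)"
    by (rule member_le_sum) (use assms in \<open>auto simp: stoch_def\<close>)
  then show ?thesis using assms by (simp add: stoch_def)
qed

lemma osc_step:
  fixes A :: "real^'n^'n" and x :: "'n \<Rightarrow> real"
  assumes "stoch A" "\<And>a c. \<delta> \<le> A$a$c" "0 \<le> \<delta>" "\<delta> \<le> 1/2"
    and "\<And>c c'. x c - x c' \<le> \<theta>"
  shows "(\<Sum>c\<in>UNIV. A$a$c * x c) - (\<Sum>c\<in>UNIV. A$a'$c * x c) \<le> (1 - \<delta>) * \<theta>"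
proof -
  define M where "M = Max (range x)"
  define m where "m = Min (range x)"
  have "M \<in> range x" unfolding M_def by (rule Max_in) auto
  then obtain c1 where c1: "x c1 = M" by auto
  have "m \<in> range x" unfolding m_def by (rule Min_in) auto
  then obtain c0 where c0: "x c0 = m" by auto
  have le: "x c \<le> M" "m \<le> x c" for c unfolding M_def m_def by auto
  have th: "0 \<le> \<theta>" using assms(5)[of c0 c0] by simp
  have "(\<Sum>c\<in>UNIV. A$a$c * x c) = M - (\<Sum>c\<in>UNIV. A$a$c * (M - x c))"
    using assms(1) by (simp add: stoch_def right_diff_distrib sum_subtractf flip: sum_distrib_right)
  also have "(\<Sum>c\<in>UNIV. A$a$c * (M - x c)) \<ge> A$a$c0 * (M - x c0)"
    by (rule member_le_sum[where f="\<lambda>c. A$a$c * (M - x c)"])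
       (use assms(1) le in \<open>auto simp: stoch_def\<close>)
  moreover have "A$a$c0 * (M - x c0) \<ge> \<delta> * (M - m)"
    using assms(2)[of a c0] le[of c1] c0 c1 assms(3) by (intro mult_mono) auto
  ultimately have up: "(\<Sum>c\<in>UNIV. A$a$c * x c) \<le> M - \<delta> * (M - m)" by linarith
  have "(\<Sum>c\<in>UNIV. A$a'$c * x c) = m + (\<Sum>c\<in>UNIV. A$a'$c * (x c - m))"
    using assms(1) by (simp add: stoch_def right_diff_distrib sum_subtractf flip: sum_distrib_right)
  also have "(\<Sum>c\<in>UNIV. A$a'$c * (x c - m)) \<ge> A$a'$c1 * (x c1 - m)"
    by (rule member_le_sum[where f="\<lambda>c. A$a'$c * (x c - m)"])
       (use assms(1) le in \<open>auto simp: stoch_def\<close>)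
  moreover have "A$a'$c1 * (x c1 - m) \<ge> \<delta> * (M - m)"
    using assms(2)[of a' c1] le[of c0] c0 c1 assms(3) by (intro mult_mono) auto
  ultimately have lo: "(\<Sum>c\<in>UNIV. A$a'$c * x c) \<ge> m + \<delta> * (M - m)" by linarith
  have "M - m \<le> \<theta>" using assms(5)[of c1 c0] c0 c1 by simp
  moreover have "0 \<le> M - m" using le[of c0] c0 by simp
  ultimately have f1: "(1 - 2*\<delta>) * (M - m) \<le> (1 - 2*\<delta>) * \<theta>"
    using assms(4) by (intro mult_left_mono) auto
  have f2: "(1 - 2*\<delta>) * \<theta> \<le> (1 - \<delta>) * \<theta>"
    using th assms(3) by (intro mult_right_mono) auto
  have f3: "(M - \<delta> * (M - m)) - (m + \<delta> * (M - m)) = (1 - 2*\<delta>) * (M - m)"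
    by (simp add: algebra_simps)
  have "(\<Sum>c\<in>UNIV. A$a$c * x c) - (\<Sum>c\<in>UNIV. A$a'$c * x c) \<le> (M - \<delta> * (M - m)) - (m + \<delta> * (M - m))"
    using up lo by linarith
  also have "\<dots> \<le> (1 - \<delta>) * \<theta>" unfolding f3 using f1 f2 by linarith
  finally show ?thesis .
qed


lemma stat_matpow: assumes "p v* P = p" shows "p v* matpow P m = p"
proof (induction m)
  case 0 then show ?case by simp
next
  case (Suc m)
  have "p v* matpow P (Suc m) = (p v* matpow P m) v* P"
    by (simp add: vector_matrix_mul_assoc)
  then show ?case using Suc assms by simp
qed

lemma osc_bound:
  fixes P :: "real^'n^'n"
  assumes "stoch P" "1 \<le> N" "0 \<le> \<delta>" "\<delta> \<le> 1/2" "\<And>a b. \<delta> \<le> matpow P N $a$b"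
  shows "matpow P m $a$b - matpow P m $a'$b \<le> (1 - \<delta>) ^ (m div N)"
proof (induction m arbitrary: a a' b rule: less_induct)
  case (less m)
  show ?case
  proof (cases "m < N")
    case True
    then have "m div N = 0" by simp
    moreover have "0 \<le> matpow P m $a'$b" "matpow P m $a$b \<le> 1"
      using stoch_matpow[OF assms(1), of m] stoch_le1[OF stoch_matpow[OF assms(1)]]
      by (auto simp: stoch_def)
    ultimately show ?thesis by simp
  next
    case False
    define k where "k = m - N"
    have mk: "m = N + k" using False k_def by simp
    have kl: "k < m" using assms(2) mk by simp
    have d: "m div N = Suc (k div N)" using mk assms(2)
      by (simp add: div_add_self1)
    have "matpow P m $a$b - matpow P m $a'$b
        = (\<Sum>c\<in>UNIV. matpow P N$a$c * matpow P k$c$b) - (\<Sum>c\<in>UNIV. matpow P N$a'$c * matpow P k$c$b)"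
      unfolding mk matpow_add mmult_entry ..
    also have "\<dots> \<le> (1 - \<delta>) * (1 - \<delta>) ^ (k div N)"
      by (rule osc_step[OF stoch_matpow[OF assms(1)] assms(5) assms(3) assms(4)])
         (rule less.IH[OF kl])
    also have "\<dots> = (1 - \<delta>) ^ (m div N)" using d by simp
    finally show ?thesis .
  qed
qed

lemma conv_bound:
  fixes P :: "real^'n^'n"
  assumes "stoch P" "1 \<le> N" "0 \<le> \<delta>" "\<delta> \<le> 1/2" "\<And>a b. \<delta> \<le> matpow P N $a$b"
    and "\<And>k. 0 \<le> p$k" "(\<Sum>k\<in>UNIV. p$k) = 1" "p v* P = p"
  shows "\<bar>matpow P m $a$b - p$b\<bar> \<le> (1 - \<delta>) ^ (m div N)"
proof -
  let ?A = "matpow P m"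
  let ?t = "(1 - \<delta>) ^ (m div N)"
  have pb: "p$b = (\<Sum>a'\<in>UNIV. p$a' * ?A$a'$b)"
    using stat_matpow[OF assms(8), of m]
    by (metis (no_types, lifting) sum.cong vector_matrix_mult_def vec_lambda_beta)
  have "?A$a$b - p$b = (\<Sum>a'\<in>UNIV. p$a' * (?A$a$b - ?A$a'$b))"
    unfolding pb using assms(7)
    by (simp add: right_diff_distrib sum_subtractf flip: sum_distrib_right)
  also have "\<bar>\<dots>\<bar> \<le> (\<Sum>a'\<in>UNIV. p$a' * ?t)"
  proof -
    have "\<bar>\<Sum>a'\<in>UNIV. p$a' * (?A$a$b - ?A$a'$b)\<bar> \<le> (\<Sum>a'\<in>UNIV. \<bar>p$a' * (?A$a$b - ?A$a'$b)\<bar>)"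
      by (rule sum_abs)
    also have "\<dots> \<le> (\<Sum>a'\<in>UNIV. p$a' * ?t)"
    proof (rule sum_mono)
      fix a'
      have "\<bar>?A$a$b - ?A$a'$b\<bar> \<le> ?t"
        using osc_bound[OF assms(1-5), of m a b a'] osc_bound[OF assms(1-5), of m a' b a] by linarith
      then show "\<bar>p$a' * (?A$a$b - ?A$a'$b)\<bar> \<le> p$a' * ?t"
        using assms(6)[of a'] by (simp add: abs_mult mult_left_mono)
    qed
    finally show ?thesis .
  qed
  also have "\<dots> = ?t" using assms(7) by (simp flip: sum_distrib_right)
  finally show ?thesis .
qed

lemma pos_reach:
  fixes P :: "real^'n^'n"
  assumes "stoch P" "\<And>a. 0 < P$a$a"
    and "(a, b) \<in> {(x, y). x \<noteq> y \<and> 0 < P$x$y}\<^sup>*"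
  shows "\<exists>n. \<forall>m\<ge>n. 0 < matpow P m $a$b"
  using assms(3)
proof (induction rule: rtrancl_induct)
  case base
  have "0 < matpow P m $a$a" for m
  proof (induction m)
    case 0 then show ?case by (simp add: mat_def)
  next
    case (Suc m)
    have "matpow P m $a$a * P$a$a \<le> (\<Sum>c\<in>UNIV. matpow P m $a$c * P$c$a)"
      by (rule member_le_sum[where f="\<lambda>c. matpow P m $a$c * P$c$a"])
         (use stoch_matpow[OF assms(1), of m] assms(1) in \<open>auto simp: stoch_def\<close>)
    moreover have "0 < matpow P m $a$a * P$a$a" using Suc assms(2)[of a] by simp
    ultimately show ?case by (simp add: mmult_entry)
  qed
  then show ?case by blast
next
  case (step y z)
  then obtain n where n: "\<forall>m\<ge>n. 0 < matpow P m $a$y" by blast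
  have "0 < matpow P m $a$z" if "Suc n \<le> m" for m
  proof -
    obtain k where k: "m = Suc k" "n \<le> k" using \<open>Suc n \<le> m\<close> by (cases m) auto
    have "matpow P k $a$y * P$y$z \<le> (\<Sum>c\<in>UNIV. matpow P k $a$c * P$c$z)"
      by (rule member_le_sum[where f="\<lambda>c. matpow P k $a$c * P$c$z"])
         (use stoch_matpow[OF assms(1), of k] assms(1) in \<open>auto simp: stoch_def\<close>)
    moreover have "0 < matpow P k $a$y * P$y$z" using n k step(2) by simp
    ultimately show ?thesis using k by (simp add: mmult_entry)
  qed
  then show ?case by blast
qed


lemma geo_conv:
  fixes P :: "real^'n^'n"
  assumes "stoch P" "\<And>a. 0 < P$a$a"
    and "\<And>a b. (a, b) \<in> {(x, y). x \<noteq> y \<and> 0 < P$x$y}\<^sup>*"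
    and "\<And>k. 0 \<le> p$k" "(\<Sum>k\<in>UNIV. p$k) = 1" "p v* P = p"
  shows "\<exists>C \<rho>. 0 < \<rho> \<and> \<rho> < 1 \<and> 0 \<le> C \<and> (\<forall>m a b. \<bar>matpow P m $a$b - p$b\<bar> \<le> C * \<rho>^m)"
proof -
  have "\<forall>a b. \<exists>n. \<forall>m\<ge>n. 0 < matpow P m $a$b"
    using pos_reach[OF assms(1,2,3)] by blast
  then obtain f where f: "\<And>a b m. f a b \<le> m \<Longrightarrow> 0 < matpow P m $a$b" by metis
  define N where "N = Suc (Max (range (\<lambda>(a,b). f a b)))"
  have N1: "1 \<le> N" unfolding N_def by simp
  have fN: "f a b \<le> N" for a b
  proof -
    have "(\<lambda>(a,b). f a b) (a,b) \<le> Max (range (\<lambda>(a,b). f a b))"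
      by (rule Max_ge) auto
    then show ?thesis unfolding N_def by simp
  qed
  define \<delta>0 where "\<delta>0 = Min (range (\<lambda>(a,b). matpow P N $a$b))"
  have "\<delta>0 \<in> range (\<lambda>(a,b). matpow P N $a$b)" unfolding \<delta>0_def by (rule Min_in) auto
  then have d0: "0 < \<delta>0" using f fN by auto
  have d0le: "\<delta>0 \<le> matpow P N $a$b" for a b
  proof -
    have "\<delta>0 \<le> (\<lambda>(a,b). matpow P N $a$b) (a,b)" unfolding \<delta>0_def by (rule Min_le) auto
    then show ?thesis by simp
  qed
  define \<delta> where "\<delta> = min \<delta>0 (1/2)"
  have dpos: "0 < \<delta>" "\<delta> \<le> 1/2" "\<And>a b. \<delta> \<le> matpow P N $a$b"
    unfolding \<delta>_def using d0 d0le by (auto intro: min.coboundedI1)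
  define \<theta> where "\<theta> = 1 - \<delta>"
  have th: "0 < \<theta>" "\<theta> < 1" unfolding \<theta>_def using dpos by auto
  define \<rho> where "\<rho> = root N \<theta>"
  have rho: "0 < \<rho>" "\<rho> < 1" "\<rho> ^ N = \<theta>" unfolding \<rho>_def using th N1
    by (auto simp: real_root_pow_pos)
  have key: "\<theta> ^ (m div N) \<le> (1/\<theta>) * \<rho> ^ m" for m
  proof -
    have "\<theta> ^ (m div N) * \<theta> = \<rho> ^ (N * (m div N) + N)"
      by (simp add: power_add power_mult rho(3))
    also have "\<dots> \<le> \<rho> ^ m"
    proof (rule power_decreasing)
      have "m mod N < N" using N1 by simp
      moreover have "m = N * (m div N) + m mod N" by simp
      ultimately show "m \<le> N * (m div N) + N" by linarith
    qed (use rho in auto)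
    finally show ?thesis using th by (simp add: field_simps)
  qed
  show ?thesis
  proof (intro exI conjI allI)
    fix m a b
    have "\<bar>matpow P m $a$b - p$b\<bar> \<le> (1 - \<delta>) ^ (m div N)"
      by (rule conv_bound[OF assms(1) N1 _ dpos(2) dpos(3) assms(4-6)]) (use dpos in auto)
    then show "\<bar>matpow P m $a$b - p$b\<bar> \<le> (1/\<theta>) * \<rho> ^ m"
      using key[of m] unfolding \<theta>_def by linarith
  qed (use rho th in auto)
qed


lemma bl_left: "bounded_linear (\<lambda>X::real^'n^'n. A ** X)"
proof -
  have "linear (\<lambda>X::real^'n^'n. A ** X)"
    by (rule linearI) (simp_all add: matrix_add_ldistrib matrix_scalar_ac flip: scalar_matrix_assoc)
  then show ?thesis by (rule linear_conv_bounded_linear[THEN iffD1])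
qed

lemma left_sum: fixes f :: "'b \<Rightarrow> real^'n^'n" shows "(A::real^'n^'n) ** sum f S = (\<Sum>x\<in>S. A ** f x)"
proof -
  have "linear (\<lambda>X::real^'n^'n. A ** X)" using bl_left bounded_linear.linear by blast
  from linear_sum[OF this, of f S] show ?thesis by simp
qed

lemma rowsum_deriv_zero:
  fixes f :: "real \<Rightarrow> real^'n^'n"
  assumes "(f has_vector_derivative D) (at 0 within {0..1})"
    and "\<And>h. (\<Sum>b\<in>UNIV. f h $a$b) = 1"
  shows "(\<Sum>b\<in>UNIV. D$a$b) = 0"
proof -
  have bl: "bounded_linear (\<lambda>M::real^'n^'n. \<Sum>b\<in>UNIV. M$a$b)"
    by (intro bounded_linear_sum bounded_linear_compose[OF bounded_linear_vec_nth] bounded_linear_vec_nth)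
  have "((\<lambda>h. \<Sum>b\<in>UNIV. f h $a$b) has_vector_derivative (\<Sum>b\<in>UNIV. D$a$b)) (at 0 within {0..1})"
    using bounded_linear.has_vector_derivative[OF bl assms(1)] by (simp add: o_def)
  then have d1: "((\<lambda>h. 1::real) has_vector_derivative (\<Sum>b\<in>UNIV. D$a$b)) (at 0 within {0..1})"
    using assms(2) by simp
  have d2: "((\<lambda>h. 1::real) has_vector_derivative 0) (at 0 within {0..1})" by simp
  have nb: "at (0::real) within {0..1} \<noteq> bot"
    by (simp add: at_within_Icc_at_right)
  show ?thesis by (rule vector_derivative_unique_within[OF nb d1 d2])
qed

theorem proposition1:
  fixes Q :: "real^'n^'n" and \<gamma> :: "real^'n^'n \<Rightarrow> real"
    and p :: "real^'n" and i j :: 'n and dP :: "real^'n^'n"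
  assumes "rate_matrix Q" and "irreducible_rate Q"
    and "\<gamma> Q > (MAX k\<in>UNIV. - Q$k$k)"
    and "stationary_dist Q p"
    and "i \<noteq> j"
    and "((\<lambda>h. unif \<gamma> (perturb Q i j h)) has_vector_derivative dP)
           (at 0 within {h. Q$i$j + h \<ge> 0})"
  shows "summable (\<lambda>l. dP ** matpow (unif \<gamma> Q) l)
    \<and> (\<lambda>t. \<Sum>l=1..t. matpow (unif \<gamma> Q) (t - l) ** dP ** matpow (unif \<gamma> Q) (l - 1))
        \<longlonglongrightarrow> rows_eq p ** (\<Sum>l. dP ** matpow (unif \<gamma> Q) l)"
proof -
  define g where "g = \<gamma> Q"
  define P where "P = unif \<gamma> Q"
  define Pm where "Pm = rows_eq p"
  have Qoff: "\<And>a b. a \<noteq> b \<Longrightarrow> 0 \<le> Q$a$b" and Qrow: "\<And>a. (\<Sum>b\<in>UNIV. Q$a$b) = 0"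
    using assms(1) unfolding rate_matrix_def by auto
  have Qdiag: "Q$a$a \<le> 0" for a
  proof -
    have "(\<Sum>b\<in>UNIV. Q$a$b) = Q$a$a + (\<Sum>b\<in>UNIV-{a}. Q$a$b)"
      by (simp add: sum.remove)
    moreover have "0 \<le> (\<Sum>b\<in>UNIV-{a}. Q$a$b)" by (intro sum_nonneg) (auto intro: Qoff)
    ultimately show ?thesis using Qrow[of a] by linarith
  qed
  have gdiag: "- Q$a$a < g" for a
  proof -
    have "- Q$a$a \<le> (MAX k\<in>UNIV. - Q$k$k)" by (rule Max_ge) auto
    then show ?thesis using assms(3) unfolding g_def by linarith
  qed
  have gpos: "0 < g" using gdiag[of undefined] Qdiag[of undefined] by linarith
  have Pent: "P$a$b = (if a = b then 1 else 0) + Q$a$b / g" for a b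
    unfolding P_def unif_def g_def by (simp add: mat_def)
  have stP: "stoch P"
  proof -
    have "0 \<le> P$a$b" for a b
    proof (cases "a = b")
      case True then show ?thesis using gdiag[of a] gpos by (simp add: Pent field_simps)
    next
      case False then show ?thesis using Qoff[OF False] gpos by (simp add: Pent)
    qed
    moreover have "(\<Sum>b\<in>UNIV. P$a$b) = 1" for a
      unfolding Pent sum.distrib using Qrow[of a] by (simp flip: sum_divide_distrib)
    ultimately show ?thesis unfolding stoch_def by blast
  qed
  have Pdiag: "0 < P$a$a" for a using gdiag[of a] gpos by (simp add: Pent field_simps)
  have reach: "(a, b) \<in> {(x, y). x \<noteq> y \<and> 0 < P$x$y}\<^sup>*" for a b
  proof -
    have "{(x, y). x \<noteq> y \<and> 0 < Q$x$y} \<subseteq> {(x, y). x \<noteq> y \<and> 0 < P$x$y}"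
      using gpos by (auto simp: Pent)
    then show ?thesis using assms(2) unfolding irreducible_rate_def
      by (meson rtrancl_mono subsetD)
  qed
  have pn: "\<And>k. 0 \<le> p$k" and ps: "(\<Sum>k\<in>UNIV. p$k) = 1" and pQ: "p v* Q = 0"
    using assms(4) unfolding stationary_dist_def by auto
  have pP: "p v* P = p"
  proof -
    have "(p v* P)$b = p$b" for b
    proof -
      have "(p v* P)$b = (\<Sum>a\<in>UNIV. p$a * (if a = b then 1 else 0)) + (\<Sum>a\<in>UNIV. p$a * Q$a$b) / g"
        unfolding vector_matrix_mult_def Pent
        by (simp add: distrib_left sum.distrib sum_divide_distrib)
      also have "(\<Sum>a\<in>UNIV. p$a * Q$a$b) = 0"
        using arg_cong[OF pQ, of "\<lambda>v. v$b"] unfolding vector_matrix_mult_def by simp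
      finally show ?thesis by (simp add: if_distrib cong: if_cong)
    qed
    then show ?thesis by (simp add: vec_eq_iff)
  qed
  obtain C \<rho> where rho: "0 < \<rho>" "\<rho> < 1" "0 \<le> C"
    and Cb: "\<And>m a b. \<bar>matpow P m $a$b - p$b\<bar> \<le> C * \<rho>^m"
    using geo_conv[OF stP Pdiag reach pn ps pP] by blast
  define E where "E m = matpow P m - Pm" for m
  have PE: "matpow P m = Pm + E m" for m unfolding E_def by simp
  define B where "B = real CARD('n) * real CARD('n) * C"
  have B0: "0 \<le> B" unfolding B_def using rho by simp
  have El1: "l1m (E m) \<le> B * \<rho>^m" for m
  proof -
    have "l1m (E m) \<le> (\<Sum>a\<in>(UNIV::'n set). \<Sum>b\<in>(UNIV::'n set). C * \<rho>^m)"
      unfolding l1m_def E_def Pm_def rows_eq_def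
      by (intro sum_mono) (simp add: Cb)
    then show ?thesis unfolding B_def by simp
  qed
  have dProw: "(\<Sum>b\<in>UNIV. dP$a$b) = 0" for a
  proof (rule rowsum_deriv_zero)
    have "{0..1} \<subseteq> {h. Q$i$j + h \<ge> 0}" using Qoff[OF assms(5)] by auto
    then show "((\<lambda>h. unif \<gamma> (perturb Q i j h)) has_vector_derivative dP) (at 0 within {0..1})"
      using has_vector_derivative_within_subset[OF assms(6)] by blast
  next
    fix h
    have "(\<Sum>b\<in>UNIV. perturb Q i j h $a$b) = 0"
      unfolding perturb_def using Qrow[of a] by (cases "a = i") (simp_all add: sum.distrib sum_subtractf)
    then show "(\<Sum>b\<in>UNIV. unif \<gamma> (perturb Q i j h) $a$b) = 1"
      unfolding unif_def by (simp add: mat_def sum.distrib flip: sum_divide_distrib)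
  qed
  have dPPi: "dP ** Pm = 0"
    unfolding Pm_def rows_eq_def
    by (simp add: vec_eq_iff matrix_matrix_mult_def dProw flip: sum_distrib_right)
  have dPE: "dP ** matpow P l = dP ** E l" for l
    unfolding PE matrix_add_ldistrib dPPi by simp
  define D where "D = l1m dP"
  have D0: "0 \<le> D" unfolding D_def by (rule l1m_nonneg)
  have nb: "norm (dP ** matpow P l) \<le> D * B * \<rho>^l" for l
  proof -
    have "norm (dP ** matpow P l) \<le> l1m (dP ** E l)" unfolding dPE by (rule norm_le_l1m)
    also have "\<dots> \<le> D * l1m (E l)" unfolding D_def by (rule l1m_mult)
    also have "\<dots> \<le> D * (B * \<rho>^l)" by (rule mult_left_mono[OF El1 D0])
    finally show ?thesis by simp
  qed
  have summ: "summable (\<lambda>l. dP ** matpow P l)"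
  proof (rule summable_norm_cancel, rule summable_comparison_test)
    show "\<exists>N. \<forall>n\<ge>N. norm (norm (dP ** matpow P n)) \<le> D * B * \<rho>^n" using nb by auto
    show "summable (\<lambda>n. D * B * \<rho>^n)" using rho by (intro summable_mult summable_geometric) auto
  qed
  define S where "S = (\<Sum>l. dP ** matpow P l)"
  have split: "(\<Sum>l=1..t. matpow P (t - l) ** dP ** matpow P (l - 1))
      = Pm ** (\<Sum>l<t. dP ** matpow P l) + (\<Sum>l=1..t. E (t - l) ** (dP ** E (l - 1)))" for t
  proof -
    have "(\<Sum>l=1..t. matpow P (t - l) ** dP ** matpow P (l - 1))
        = (\<Sum>l=1..t. Pm ** (dP ** matpow P (l - 1)) + E (t - l) ** (dP ** E (l - 1)))"
      by (intro sum.cong refl) (simp add: PE[of "t - _"] matrix_add_rdistrib matrix_mul_assoc flip: dPE)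
    also have "\<dots> = (\<Sum>l=1..t. Pm ** (dP ** matpow P (l - 1))) + (\<Sum>l=1..t. E (t - l) ** (dP ** E (l - 1)))"
      by (rule sum.distrib)
    also have "(\<Sum>l=1..t. Pm ** (dP ** matpow P (l - 1))) = Pm ** (\<Sum>l<t. dP ** matpow P l)"
      by (simp add: left_sum sum.atLeast1_atMost_eq)
    finally show ?thesis .
  qed
  have lim1: "(\<lambda>t. Pm ** (\<Sum>l<t. dP ** matpow P l)) \<longlonglongrightarrow> Pm ** S"
    unfolding S_def by (rule bounded_linear.tendsto[OF bl_left summable_LIMSEQ[OF summ]])
  have lim2: "(\<lambda>t. \<Sum>l=1..t. E (t - l) ** (dP ** E (l - 1))) \<longlonglongrightarrow> 0"
  proof (rule Lim_null_comparison)
    show "\<forall>\<^sub>F t in sequentially. norm (\<Sum>l=1..t. E (t - l) ** (dP ** E (l - 1))) \<le> B * D * B / \<rho> * (real t * \<rho>^t)"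
    proof (intro always_eventually allI)
      fix t :: nat
      have "norm (\<Sum>l=1..t. E (t - l) ** (dP ** E (l - 1))) \<le> (\<Sum>l=1..t. norm (E (t - l) ** (dP ** E (l - 1))))"
        by (rule norm_sum)
      also have "\<dots> \<le> (\<Sum>l=1..t. B * D * B / \<rho> * \<rho>^t)"
      proof (rule sum_mono)
        fix l assume l: "l \<in> {1..t}"
        have "norm (E (t - l) ** (dP ** E (l - 1))) \<le> l1m (E (t - l)) * (D * l1m (E (l - 1)))"
          unfolding D_def
          by (meson l1m_mult l1m_nonneg mult_left_mono norm_le_l1m order_trans)
        also have "\<dots> \<le> (B * \<rho>^(t - l)) * (D * (B * \<rho>^(l - 1)))"
          by (intro mult_mono mult_left_mono El1 D0 l1m_nonneg mult_nonneg_nonneg B0) (use rho in auto)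
        also have "\<dots> = B * D * B * (\<rho>^(t - l) * \<rho>^(l - 1))" by (simp add: algebra_simps)
        also have "\<rho>^(t - l) * \<rho>^(l - 1) = \<rho>^t / \<rho>"
        proof -
          have "\<rho>^(t - l) * \<rho>^(l - 1) * \<rho> = \<rho>^t"
            using l by (simp flip: power_add power_Suc2)
          then show ?thesis using rho by (simp add: field_simps)
        qed
        finally show "norm (E (t - l) ** (dP ** E (l - 1))) \<le> B * D * B / \<rho> * \<rho>^t" by simp
      qed
      also have "\<dots> = B * D * B / \<rho> * (real t * \<rho>^t)" by simp
      finally show "norm (\<Sum>l=1..t. E (t - l) ** (dP ** E (l - 1))) \<le> B * D * B / \<rho> * (real t * \<rho>^t)" .
    qed
    have "(\<lambda>n. real n * \<rho>^n) \<longlonglongrightarrow> 0" using powser_times_n_limit_0[of \<rho>] rho by simp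
    then show "(\<lambda>t. B * D * B / \<rho> * (real t * \<rho>^t)) \<longlonglongrightarrow> 0"
      using tendsto_mult_right_zero by blast
  qed
  have "(\<lambda>t. \<Sum>l=1..t. matpow P (t - l) ** dP ** matpow P (l - 1)) \<longlonglongrightarrow> Pm ** S + 0"
    unfolding split by (rule tendsto_add[OF lim1 lim2])
  then show ?thesis using summ unfolding P_def Pm_def S_def by simp
qed

end
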